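(* Assume the vertex degrees of $G$ are uniformly bounded, let $\theta\in(0,1)$, $\rho=\lim_nR_n^{1/n}$, and let $z\in\mathbb C$ with $|z|>\theta\rho$. Then every $f\in\mathrm{Lip}_\theta$ with $\mathcal Tf=zf$ lies in $D_1$, i.e. $f(e_1,e_2,\dots)$ depends only on $e_1$.
   Context: $G$ is a connected, locally finite graph (no loops, no multiple edges, every vertex of degree $\ge2$), possibly infinite. $E$ oriented edges with $\iota,\tau$, opposite $\bar e$; turn $e\rightsquigarrow e'$ iff $\tau(e)=\iota(e')$, $e'\ne\bar e$. $P$ = infinite paths $(e_1,e_2,\dots)$ with $e_i\rightsquigarrow e_{i+1}$; $(\mathcal Tf)(e_1,\dots)=\sum_{e_0\rightsquigarrow e_1}f(e_0,e_1,\dots)$. $R_n=\sup_e\#\{(e_{-n},\dots,e_0):e_i\rightsquigarrow e_{i+1},\ e_0=e\}$. $D_1$ = bounded functions on $P$ depending only on the first edge. $d_\theta(p,p')=\theta^{k-1}$, $k=\min\{i:e_i\ne e'_i\}$; $\mathrm{Lip}_\theta$ = bounded $f:P\to\mathbb C$ uniformly $d_\theta$-Lipschitz on each island $\{p:\iota(e_1)=v\}$. *)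

theory Defs
  imports "HOL-Analysis.Analysis"
begin

text \<open>Oriented edges are pairs (u,v) with adj u v; iota = fst, tau = snd,
  reversed edge = (snd e, fst e). Paths (e_1,e_2,...) are indexed from 0.\<close>

definition nbrs :: "('v \<Rightarrow> 'v \<Rightarrow> bool) \<Rightarrow> 'v \<Rightarrow> 'v set" where
  "nbrs adj v = {w. adj v w}"

definition graph_ok :: "('v \<Rightarrow> 'v \<Rightarrow> bool) \<Rightarrow> bool" where
  "graph_ok adj \<longleftrightarrow>
     (\<forall>u v. adj u v \<longrightarrow> adj v u) \<and> (\<forall>v. \<not> adj v v) \<and>
     (\<forall>u v. adj\<^sup>*\<^sup>* u v) \<and>
     (\<forall>v. finite (nbrs adj v) \<and> card (nbrs adj v) \<ge> 2)"

definition bounded_degree :: "('v \<Rightarrow> 'v \<Rightarrow> bool) \<Rightarrow> bool" where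
  "bounded_degree adj \<longleftrightarrow> (\<exists>M::nat. \<forall>v. card (nbrs adj v) \<le> M)"

definition is_edge :: "('v \<Rightarrow> 'v \<Rightarrow> bool) \<Rightarrow> 'v \<times> 'v \<Rightarrow> bool" where
  "is_edge adj e \<longleftrightarrow> adj (fst e) (snd e)"

definition turn :: "('v \<Rightarrow> 'v \<Rightarrow> bool) \<Rightarrow> 'v \<times> 'v \<Rightarrow> 'v \<times> 'v \<Rightarrow> bool" where
  "turn adj e e' \<longleftrightarrow> is_edge adj e \<and> is_edge adj e' \<and> snd e = fst e' \<and> e' \<noteq> (snd e, fst e)"

definition paths :: "('v \<Rightarrow> 'v \<Rightarrow> bool) \<Rightarrow> (nat \<Rightarrow> 'v \<times> 'v) set" where
  "paths adj = {p. \<forall>i. turn adj (p i) (p (Suc i))}"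

text \<open>Transfer operator: (T f)(e_1,...) = sum over e_0 turning into e_1 of f(e_0,e_1,...).\<close>
definition transfer :: "('v \<Rightarrow> 'v \<Rightarrow> bool) \<Rightarrow> ((nat \<Rightarrow> 'v \<times> 'v) \<Rightarrow> complex)
    \<Rightarrow> (nat \<Rightarrow> 'v \<times> 'v) \<Rightarrow> complex" where
  "transfer adj f p = (\<Sum>e0\<in>{e0. turn adj e0 (p 0)}. f (case_nat e0 p))"

definition Rn :: "('v \<Rightarrow> 'v \<Rightarrow> bool) \<Rightarrow> nat \<Rightarrow> nat" where
  "Rn adj n = Sup {card {xs. length xs = Suc n \<and> last xs = e \<and> (\<forall>x\<in>set xs. is_edge adj x)
                      \<and> (\<forall>i<n. turn adj (xs ! i) (xs ! Suc i))} | e. is_edge adj e}"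

text \<open>d_theta(p,p') = theta^(k-1), k the first (1-based) index where they differ; 0 if equal.\<close>
definition dtheta :: "real \<Rightarrow> (nat \<Rightarrow> 'e) \<Rightarrow> (nat \<Rightarrow> 'e) \<Rightarrow> real" where
  "dtheta \<theta> p p' = (if p = p' then 0 else \<theta> ^ (LEAST i. p i \<noteq> p' i))"

definition Lip_theta :: "('v \<Rightarrow> 'v \<Rightarrow> bool) \<Rightarrow> real \<Rightarrow> ((nat \<Rightarrow> 'v \<times> 'v) \<Rightarrow> complex) \<Rightarrow> bool" where
  "Lip_theta adj \<theta> f \<longleftrightarrow>
     (\<exists>B. \<forall>p\<in>paths adj. norm (f p) \<le> B) \<and>
     (\<exists>C. \<forall>p\<in>paths adj. \<forall>p'\<in>paths adj. fst (p 0) = fst (p' 0) \<longrightarrow>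
            norm (f p - f p') \<le> C * dtheta \<theta> p p')"

definition in_D1 :: "('v \<Rightarrow> 'v \<Rightarrow> bool) \<Rightarrow> ((nat \<Rightarrow> 'v \<times> 'v) \<Rightarrow> complex) \<Rightarrow> bool" where
  "in_D1 adj f \<longleftrightarrow>
     (\<exists>B. \<forall>p\<in>paths adj. norm (f p) \<le> B) \<and>
     (\<forall>p\<in>paths adj. \<forall>p'\<in>paths adj. p 0 = p' 0 \<longrightarrow> f p = f p')"

end

theory Submission
  imports Defs
begin

definition chains :: "('v \<Rightarrow> 'v \<Rightarrow> bool) \<Rightarrow> nat \<Rightarrow> 'v \<times> 'v \<Rightarrow> ('v \<times> 'v) list set" where
  "chains adj n e = {xs. length xs = Suc n \<and> last xs = e \<and> (\<forall>x\<in>set xs. is_edge adj x)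
                      \<and> (\<forall>i<n. turn adj (xs ! i) (xs ! Suc i))}"

lemma chains0: "is_edge adj e \<Longrightarrow> chains adj 0 e = {[e]}"
  unfolding chains_def
  by (auto simp: length_Suc_conv)

lemma chains_Suc:
  "chains adj (Suc n) e = (\<Union>e0\<in>{e0. turn adj e0 e}. (\<lambda>ys. ys @ [e]) ` chains adj n e0)"
proof
  show "chains adj (Suc n) e \<subseteq> (\<Union>e0\<in>{e0. turn adj e0 e}. (\<lambda>ys. ys @ [e]) ` chains adj n e0)"
  proof
    fix xs assume xs: "xs \<in> chains adj (Suc n) e"
    hence len: "length xs = Suc (Suc n)" and l: "last xs = e"
      and ed: "\<forall>x\<in>set xs. is_edge adj x" and tr: "\<forall>i<Suc n. turn adj (xs ! i) (xs ! Suc i)"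
      by (auto simp: chains_def)
    define ys where "ys = butlast xs"
    have ne: "xs \<noteq> []" using len by auto
    have xsy: "xs = ys @ [e]" using ne l append_butlast_last_id[of xs] by (simp add: ys_def)
    have leny: "length ys = Suc n" using len by (simp add: ys_def)
    have yne: "ys \<noteq> []" using leny by auto
    have ly0: "last ys = ys ! n" using leny last_conv_nth[OF yne] by simp
    have ly: "last ys = xs ! n"
      using ly0 leny xsy by (simp add: nth_append)
    have "turn adj (xs ! n) e" using tr[rule_format, of n] xsy leny by (simp add: nth_append)
    moreover have "\<forall>i<n. turn adj (ys ! i) (ys ! Suc i)"
    proof (intro allI impI)
      fix i assume i: "i < n"
      hence "turn adj (xs ! i) (xs ! Suc i)" using tr by simp
      thus "turn adj (ys ! i) (ys ! Suc i)" using i leny xsy by (simp add: nth_append)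
    qed
    hence "ys \<in> chains adj n (xs ! n)"
      unfolding chains_def using leny ly ed xsy
      by auto
    ultimately show "xs \<in> (\<Union>e0\<in>{e0. turn adj e0 e}. (\<lambda>ys. ys @ [e]) ` chains adj n e0)"
      using xsy by blast
  qed
next
  show "(\<Union>e0\<in>{e0. turn adj e0 e}. (\<lambda>ys. ys @ [e]) ` chains adj n e0) \<subseteq> chains adj (Suc n) e"
  proof clarify
    fix e0 ys assume t: "turn adj e0 e" and ys: "ys \<in> chains adj n e0"
    hence leny: "length ys = Suc n" and l: "last ys = e0"
      and ed: "\<forall>x\<in>set ys. is_edge adj x" and tr: "\<forall>i<n. turn adj (ys ! i) (ys ! Suc i)"
      by (auto simp: chains_def)
    have ln: "ys ! n = e0" using l leny last_conv_nth[of ys] by (metis Zero_neq_Suc diff_Suc_1 list.size(3))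
    have "is_edge adj e" using t by (simp add: turn_def)
    moreover have "\<forall>i<Suc n. turn adj ((ys @ [e]) ! i) ((ys @ [e]) ! Suc i)"
    proof (intro allI impI)
      fix i assume i: "i < Suc n"
      show "turn adj ((ys @ [e]) ! i) ((ys @ [e]) ! Suc i)"
      proof (cases "i < n")
        case True thus ?thesis using tr leny by (simp add: nth_append)
      next
        case False hence "i = n" using i by simp
        thus ?thesis using t ln leny by (simp add: nth_append)
      qed
    qed
    ultimately show "ys @ [e] \<in> chains adj (Suc n) e"
      unfolding chains_def using leny ed by auto
  qed
qed

locale G =
  fixes adj :: "'v \<Rightarrow> 'v \<Rightarrow> bool" and M :: nat
  assumes sym: "\<And>u v. adj u v \<Longrightarrow> adj v u"
    and fin: "\<And>v. finite (nbrs adj v)"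
    and Mb: "\<And>v. card (nbrs adj v) \<le> M"
begin

lemma turnset_sub: "{e0. turn adj e0 e} \<subseteq> (\<lambda>w. (w, fst e)) ` nbrs adj (fst e)"
proof
  fix e0 assume "e0 \<in> {e0. turn adj e0 e}"
  hence "adj (fst e0) (snd e0)" "snd e0 = fst e" by (auto simp: turn_def is_edge_def)
  hence "fst e0 \<in> nbrs adj (fst e)" "e0 = (fst e0, fst e)" using sym by (auto simp: nbrs_def prod_eq_iff)
  thus "e0 \<in> (\<lambda>w. (w, fst e)) ` nbrs adj (fst e)" by blast
qed

lemma turnset_fin: "finite {e0. turn adj e0 e}"
  using turnset_sub fin finite_subset by blast

lemma turnset_card: "card {e0. turn adj e0 e} \<le> M"
proof -
  have "card {e0. turn adj e0 e} \<le> card ((\<lambda>w. (w, fst e)) ` nbrs adj (fst e))"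
    using turnset_sub fin by (intro card_mono) auto
  also have "\<dots> \<le> card (nbrs adj (fst e))" by (rule card_image_le[OF fin])
  finally show ?thesis using Mb order_trans by blast
qed

lemma chains_fin: "finite (chains adj n e)"
proof (induction n arbitrary: e)
  case 0
  have "chains adj 0 e \<subseteq> {[e]}" by (auto simp: chains_def length_Suc_conv)
  thus ?case using finite_subset by blast
next
  case (Suc n) thus ?case by (simp add: chains_Suc turnset_fin)
qed

lemma chains_card_Suc:
  "card (chains adj (Suc n) e) = (\<Sum>e0\<in>{e0. turn adj e0 e}. card (chains adj n e0))"
proof -
  have "card (chains adj (Suc n) e) = (\<Sum>e0\<in>{e0. turn adj e0 e}. card ((\<lambda>ys. ys @ [e]) ` chains adj n e0))"
    unfolding chains_Suc
  proof (rule card_UN_disjoint)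
    show "finite {e0. turn adj e0 e}" by (rule turnset_fin)
    show "\<forall>i\<in>{e0. turn adj e0 e}. finite ((\<lambda>ys. ys @ [e]) ` chains adj n i)"
      using chains_fin by blast
    show "\<forall>i\<in>{e0. turn adj e0 e}. \<forall>j\<in>{e0. turn adj e0 e}. i \<noteq> j \<longrightarrow>
        (\<lambda>ys. ys @ [e]) ` chains adj n i \<inter> (\<lambda>ys. ys @ [e]) ` chains adj n j = {}"
      by (auto simp: chains_def)
  qed
  also have "\<dots> = (\<Sum>e0\<in>{e0. turn adj e0 e}. card (chains adj n e0))"
    by (intro sum.cong refl card_image) (auto simp: inj_on_def)
  finally show ?thesis .
qed

lemma chains_card_le: "card (chains adj n e) \<le> M ^ n"
proof (induction n arbitrary: e)
  case 0
  have "chains adj 0 e \<subseteq> {[e]}" by (auto simp: chains_def length_Suc_conv)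
  hence "card (chains adj 0 e) \<le> card {[e]}" by (intro card_mono) auto
  thus ?case by simp
next
  case (Suc n)
  have "card (chains adj (Suc n) e) \<le> (\<Sum>e0\<in>{e0. turn adj e0 e}. M ^ n)"
    unfolding chains_card_Suc by (intro sum_mono Suc)
  also have "\<dots> = card {e0. turn adj e0 e} * M ^ n" by simp
  also have "\<dots> \<le> M * M ^ n" using turnset_card by (intro mult_right_mono) auto
  finally show ?case by simp
qed

lemma chains_le_Rn: "is_edge adj e \<Longrightarrow> card (chains adj n e) \<le> Rn adj n"
  unfolding Rn_def
proof (rule cSup_upper)
  assume "is_edge adj e"
  thus "card (chains adj n e) \<in> {card {xs. length xs = Suc n \<and> last xs = e \<and> (\<forall>x\<in>set xs. is_edge adj x)
                      \<and> (\<forall>i<n. turn adj (xs ! i) (xs ! Suc i))} | e. is_edge adj e}"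
    unfolding chains_def by blast
  show "bdd_above {card {xs. length xs = Suc n \<and> last xs = e \<and> (\<forall>x\<in>set xs. is_edge adj x)
                      \<and> (\<forall>i<n. turn adj (xs ! i) (xs ! Suc i))} | e. is_edge adj e}"
    using chains_card_le[of n] unfolding chains_def[symmetric]
    by (intro bdd_aboveI[of _ "M ^ n"]) auto
qed

end


lemma dtheta_cons:
  fixes p p' :: "nat \<Rightarrow> 'e"
  shows "dtheta \<theta> (case_nat e0 p) (case_nat e0 p') = \<theta> * dtheta \<theta> p p'"
proof (cases "p = p'")
  case True thus ?thesis by (simp add: dtheta_def)
next
  case False
  then obtain n where n: "p n \<noteq> p' n" by auto
  hence ne: "case_nat e0 p \<noteq> case_nat e0 p'"
    by (metis nat.simps(5))
  have "(LEAST i. case_nat e0 p i \<noteq> case_nat e0 p' i) = Suc (LEAST m. case_nat e0 p (Suc m) \<noteq> case_nat e0 p' (Suc m))"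
    by (rule Least_Suc[of _ "Suc n"]) (use n in auto)
  thus ?thesis using False ne by (simp add: dtheta_def)
qed

lemma path_cons:
  assumes "p \<in> paths adj" "turn adj e0 (p 0)"
  shows "case_nat e0 p \<in> paths adj"
  using assms unfolding paths_def
  by (auto split: nat.split)

lemma path_edge: "p \<in> paths adj \<Longrightarrow> is_edge adj (p 0)"
  unfolding paths_def turn_def by blast

context G begin

lemma key:
  fixes f :: "(nat \<Rightarrow> 'v \<times> 'v) \<Rightarrow> complex" and z :: complex
  assumes Tf: "\<forall>p\<in>paths adj. transfer adj f p = z * f p"
    and lip: "\<forall>p\<in>paths adj. \<forall>p'\<in>paths adj. fst (p 0) = fst (p' 0) \<longrightarrow>
            norm (f p - f p') \<le> K * dtheta \<theta> p p'"
    and K: "K \<ge> 0" and th: "\<theta> \<ge> 0"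
  shows "p \<in> paths adj \<Longrightarrow> p' \<in> paths adj \<Longrightarrow> p 0 = p' 0 \<Longrightarrow>
     norm z ^ n * norm (f p - f p') \<le> K * \<theta> ^ n * card (chains adj n (p 0)) * dtheta \<theta> p p'"
proof (induction n arbitrary: p p')
  case 0
  have "card (chains adj 0 (p 0)) = 1" using chains0[OF path_edge[OF "0.prems"(1)]] by simp
  thus ?case using lip "0.prems" by simp
next
  case (Suc n)
  define S where "S = {e0. turn adj e0 (p 0)}"
  have "norm z ^ Suc n * norm (f p - f p') = norm z ^ n * norm (z * f p - z * f p')"
    by (simp add: norm_mult flip: right_diff_distrib)
  also have "z * f p - z * f p' = transfer adj f p - transfer adj f p'"
    using Tf Suc.prems by simp
  also have "\<dots> = (\<Sum>e0\<in>S. f (case_nat e0 p) - f (case_nat e0 p'))"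
    unfolding transfer_def S_def using Suc.prems(3) by (simp add: sum_subtractf)
  also have "norm z ^ n * norm \<dots> \<le> norm z ^ n * (\<Sum>e0\<in>S. norm (f (case_nat e0 p) - f (case_nat e0 p')))"
    by (intro mult_left_mono norm_sum) auto
  also have "\<dots> = (\<Sum>e0\<in>S. norm z ^ n * norm (f (case_nat e0 p) - f (case_nat e0 p')))"
    by (simp add: sum_distrib_left)
  also have "\<dots> \<le> (\<Sum>e0\<in>S. K * \<theta> ^ n * card (chains adj n e0) * dtheta \<theta> (case_nat e0 p) (case_nat e0 p'))"
  proof (rule sum_mono)
    fix e0 assume e0: "e0 \<in> S"
    have t: "turn adj e0 (p 0)" using e0 S_def by simp
    have "case_nat e0 p \<in> paths adj" by (rule path_cons[OF Suc.prems(1) t])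
    moreover have "case_nat e0 p' \<in> paths adj" using t Suc.prems(3) by (intro path_cons[OF Suc.prems(2)]) simp
    ultimately show "norm z ^ n * norm (f (case_nat e0 p) - f (case_nat e0 p'))
       \<le> K * \<theta> ^ n * card (chains adj n e0) * dtheta \<theta> (case_nat e0 p) (case_nat e0 p')"
      using Suc.IH[of "case_nat e0 p" "case_nat e0 p'"] by simp
  qed
  also have "\<dots> = (\<Sum>e0\<in>S. (K * \<theta> ^ Suc n * dtheta \<theta> p p') * card (chains adj n e0))"
    by (simp add: dtheta_cons mult_ac)
  also have "\<dots> = (K * \<theta> ^ Suc n * dtheta \<theta> p p') * (\<Sum>e0\<in>S. card (chains adj n e0))"
    by (simp add: sum_distrib_left)
  also have "(\<Sum>e0\<in>S. card (chains adj n e0)) = card (chains adj (Suc n) (p 0))"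
    unfolding S_def chains_card_Suc ..
  finally show ?case by (simp add: mult_ac)
qed

end

theorem mainTheorem8:
  fixes adj :: "'v \<Rightarrow> 'v \<Rightarrow> bool" and \<theta> \<rho> :: real and z :: complex
    and f :: "(nat \<Rightarrow> 'v \<times> 'v) \<Rightarrow> complex"
  assumes "graph_ok adj" and "bounded_degree adj"
    and "0 < \<theta>" and "\<theta> < 1"
    and "(\<lambda>n. root n (real (Rn adj n))) \<longlonglongrightarrow> \<rho>"
    and "norm z > \<theta> * \<rho>"
    and "Lip_theta adj \<theta> f"
    and "\<forall>p\<in>paths adj. transfer adj f p = z * f p"
  shows "in_D1 adj f"
proof -
  obtain M where M: "\<forall>v. card (nbrs adj v) \<le> M" using assms(2) unfolding bounded_degree_def by blast
  have g1: "\<forall>u v. adj u v \<longrightarrow> adj v u" and g2: "\<forall>v. finite (nbrs adj v)"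
    using assms(1) unfolding graph_ok_def by (fact conjunct1, simp)
  interpret G adj M
  proof
    show "adj u v \<Longrightarrow> adj v u" for u v using g1 by blast
    show "finite (nbrs adj v)" for v using g2 by blast
    show "card (nbrs adj v) \<le> M" for v using M by blast
  qed
  have L1: "\<exists>B. \<forall>p\<in>paths adj. norm (f p) \<le> B" and
    L2: "\<exists>C. \<forall>p\<in>paths adj. \<forall>p'\<in>paths adj. fst (p 0) = fst (p' 0) \<longrightarrow>
            norm (f p - f p') \<le> C * dtheta \<theta> p p'"
    using assms(7) unfolding Lip_theta_def by (fact conjunct1, fact conjunct2)
  obtain B where B: "\<forall>p\<in>paths adj. norm (f p) \<le> B" using L1 by (elim exE)
  obtain C where C: "\<forall>p\<in>paths adj. \<forall>p'\<in>paths adj. fst (p 0) = fst (p' 0) \<longrightarrow>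
            norm (f p - f p') \<le> C * dtheta \<theta> p p'" using L2 by (elim exE)
  define K where "K = max C 0"
  have dpos: "dtheta \<theta> p p' \<ge> 0" for p p' :: "nat \<Rightarrow> 'v \<times> 'v"
    using assms(3) by (simp add: dtheta_def)
  have lip: "\<forall>p\<in>paths adj. \<forall>p'\<in>paths adj. fst (p 0) = fst (p' 0) \<longrightarrow>
            norm (f p - f p') \<le> K * dtheta \<theta> p p'"
  proof (intro ballI impI)
    fix p p' assume "p \<in> paths adj" "p' \<in> paths adj" "fst (p 0) = fst (p' 0)"
    hence "norm (f p - f p') \<le> C * dtheta \<theta> p p'" using C by blast
    also have "\<dots> \<le> K * dtheta \<theta> p p'" unfolding K_def by (intro mult_right_mono dpos) auto
    finally show "norm (f p - f p') \<le> K * dtheta \<theta> p p'" .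
  qed
  have K0: "K \<ge> 0" by (simp add: K_def)
  have rho0: "\<rho> \<ge> 0"
    by (rule LIMSEQ_le_const[OF assms(5)]) (intro exI[of _ 0] allI impI real_root_ge_zero, simp)
  have zpos: "norm z > 0" using assms(3,6) rho0
    by (smt (verit) mult_nonneg_nonneg)
  define a where "a n = real (Rn adj n) * (\<theta> / norm z) ^ n" for n
  have lim1: "(\<lambda>n. root n (real (Rn adj n)) * (\<theta> / norm z)) \<longlonglongrightarrow> \<rho> * (\<theta> / norm z)"
    by (intro tendsto_mult_right assms(5))
  have ev: "eventually (\<lambda>n. root n (real (Rn adj n)) * (\<theta> / norm z) = root n (norm (a n))) sequentially"
    using eventually_gt_at_top[of 0]
  proof eventually_elim
    case (elim n)
    have "root n (norm (a n)) = root n (real (Rn adj n) * (\<theta> / norm z) ^ n)"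
      unfolding a_def using assms(3) zpos by simp
    also have "\<dots> = root n (real (Rn adj n)) * (\<theta> / norm z)"
      using elim assms(3) zpos by (simp add: real_root_mult real_root_power_cancel)
    finally show ?case by simp
  qed
  have "(\<lambda>n. root n (norm (a n))) \<longlonglongrightarrow> \<rho> * (\<theta> / norm z)"
    using lim1 unfolding tendsto_cong[OF ev] .
  moreover have "\<rho> * (\<theta> / norm z) < 1"
    using assms(6) zpos by (simp add: field_simps)
  ultimately have "summable a" by (rule root_test_convergence)
  hence a0: "a \<longlonglongrightarrow> 0" by (rule summable_LIMSEQ_zero)
  have eq: "f p = f p'" if p: "p \<in> paths adj" "p' \<in> paths adj" "p 0 = p' 0" for p p'
  proof -
    define L where "L = K * dtheta \<theta> p p'"
    have L0: "L \<ge> 0" unfolding L_def using K0 dpos by simp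
    have bound: "norm (f p - f p') \<le> L * a n" for n
    proof -
      have "norm z ^ n * norm (f p - f p') \<le> K * \<theta> ^ n * card (chains adj n (p 0)) * dtheta \<theta> p p'"
        by (rule key[OF assms(8) lip K0]) (use assms(3) p in auto)
      also have "\<dots> \<le> K * \<theta> ^ n * real (Rn adj n) * dtheta \<theta> p p'"
        using chains_le_Rn[OF path_edge[OF p(1)], of n] K0 assms(3) dpos
        by (intro mult_right_mono mult_left_mono) auto
      also have "\<dots> = norm z ^ n * (L * a n)"
      proof -
        have "norm z ^ n * (\<theta> / norm z) ^ n = \<theta> ^ n"
          using zpos by (simp add: power_divide)
        thus ?thesis unfolding L_def a_def by (metis (no_types, lifting) mult.assoc mult.commute)
      qed
      finally show ?thesis using zpos by simp
    qed
    have "(\<lambda>n. L * a n) \<longlonglongrightarrow> L * 0" by (intro tendsto_mult_left a0)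
    hence "norm (f p - f p') \<le> L * 0"
      by (rule LIMSEQ_le_const) (use bound in auto)
    thus ?thesis by simp
  qed
  show ?thesis unfolding in_D1_def using B eq by blast
qed

end
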